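(* Let $A$ be a commutative noetherian local ring and let $x,y\in A$ be a regular exact pair of zero divisors. Let $a,b\in A$ be such that $a$ or $b$ is weakly regular on the $A$-module $A/(x,y)$. Then there are $A$-module isomorphisms (a) $\operatorname{Hom}_A(H_a,G_b)\cong\operatorname{Hom}_A(H_b,G_a)\cong G_{ab}$, and (b) $\operatorname{Hom}_A(G_a,H_b)\cong\operatorname{Hom}_A(G_b,H_a)\cong H_{ab}$.
   Context: Two non-units $x,y\in A$ form an exact pair of zero divisors if $\operatorname{Ann}_A(x)=(y)$ and $\operatorname{Ann}_A(y)=(x)$; such a pair is regular if $(x)\cap(y)=0$. An element $a\in A$ is weakly regular on a module $M$ if multiplication by $a$ on $M$ is injective. For $a\in A$, let $\gamma_a=\begin{pmatrix} x & a\\ 0 & y\end{pmatrix}$ and $\eta_a=\begin{pmatrix} y & -a\\ 0 & x\end{pmatrix}$, viewed as $A$-linear maps $A^2\to A^2$ acting on column vectors, and set $G_a=\operatorname{Coker}\gamma_a$, $H_a=\operatorname{Coker}\eta_a$. *)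

theory Defs
  imports Main "HOL-Library.FuncSet"
begin

definition is_ideal :: "'a::comm_ring_1 set \<Rightarrow> bool" where
  "is_ideal I \<longleftrightarrow> 0 \<in> I \<and> (\<forall>u\<in>I. \<forall>v\<in>I. u + v \<in> I) \<and> (\<forall>r. \<forall>u\<in>I. r * u \<in> I)"

definition gen_ideal :: "'a::comm_ring_1 set \<Rightarrow> 'a set" where
  "gen_ideal S = {t. \<exists>c. t = (\<Sum>s\<in>S. c s * s)}"

definition finitely_generated_ideal :: "'a::comm_ring_1 set \<Rightarrow> bool" where
  "finitely_generated_ideal I \<longleftrightarrow> (\<exists>S. finite S \<and> I = gen_ideal S)"

definition noetherian_ring :: "'a::comm_ring_1 itself \<Rightarrow> bool" where
  "noetherian_ring _ \<longleftrightarrow> (\<forall>I::'a set. is_ideal I \<longrightarrow> finitely_generated_ideal I)"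

definition maximal_ideal :: "'a::comm_ring_1 set \<Rightarrow> bool" where
  "maximal_ideal m \<longleftrightarrow> is_ideal m \<and> m \<noteq> UNIV \<and>
     (\<forall>J. is_ideal J \<and> m \<subseteq> J \<longrightarrow> J = m \<or> J = UNIV)"

definition local_ring :: "'a::comm_ring_1 itself \<Rightarrow> bool" where
  "local_ring _ \<longleftrightarrow> (\<exists>!m::'a set. maximal_ideal m)"

definition principal_ideal :: "'a::comm_ring_1 \<Rightarrow> 'a set" where
  "principal_ideal x = {x * r | r. True}"

definition Ann :: "'a::comm_ring_1 \<Rightarrow> 'a set" where
  "Ann x = {r. r * x = 0}"

definition exact_pair_zero_divisors :: "'a::comm_ring_1 \<Rightarrow> 'a \<Rightarrow> bool" where
  "exact_pair_zero_divisors x y \<longleftrightarrow> \<not> x dvd 1 \<and> \<not> y dvd 1 \<and>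
     Ann x = principal_ideal y \<and> Ann y = principal_ideal x"

definition regular_exact_pair :: "'a::comm_ring_1 \<Rightarrow> 'a \<Rightarrow> bool" where
  "regular_exact_pair x y \<longleftrightarrow> exact_pair_zero_divisors x y \<and>
     principal_ideal x \<inter> principal_ideal y = {0}"

record ('a, 'm) amod =
  mcarr :: "'m set"
  madd  :: "'m \<Rightarrow> 'm \<Rightarrow> 'm"
  mzero :: "'m"
  mscal :: "'a \<Rightarrow> 'm \<Rightarrow> 'm"

definition free1 :: "('a::comm_ring_1, 'a) amod" where
  "free1 = \<lparr>mcarr = UNIV, madd = (+), mzero = 0, mscal = (*)\<rparr>"

definition free2 :: "('a::comm_ring_1, 'a \<times> 'a) amod" where
  "free2 = \<lparr>mcarr = UNIV,
            madd = (\<lambda>(p1, p2) (q1, q2). (p1 + q1, p2 + q2)),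
            mzero = (0, 0),
            mscal = (\<lambda>r (p1, p2). (r * p1, r * p2))\<rparr>"

definition quot_mod :: "('a, 'm) amod \<Rightarrow> 'm set \<Rightarrow> ('a, 'm set) amod" where
  "quot_mod M N = \<lparr>mcarr = {{q \<in> mcarr M. \<exists>n\<in>N. q = madd M p n} | p. p \<in> mcarr M},
     madd = (\<lambda>X Y. {q \<in> mcarr M. \<exists>p\<in>X. \<exists>p'\<in>Y. \<exists>n\<in>N. q = madd M (madd M p p') n}),
     mzero = {q \<in> mcarr M. \<exists>n\<in>N. q = madd M (mzero M) n},
     mscal = (\<lambda>r X. {q \<in> mcarr M. \<exists>p\<in>X. \<exists>n\<in>N. q = madd M (mscal M r p) n})\<rparr>"

definition is_linear :: "('a, 'm) amod \<Rightarrow> ('a, 'n) amod \<Rightarrow> ('m \<Rightarrow> 'n) \<Rightarrow> bool" where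
  "is_linear M N f \<longleftrightarrow> (\<forall>m\<in>mcarr M. f m \<in> mcarr N) \<and>
     (\<forall>m1\<in>mcarr M. \<forall>m2\<in>mcarr M. f (madd M m1 m2) = madd N (f m1) (f m2)) \<and>
     (\<forall>r. \<forall>m\<in>mcarr M. f (mscal M r m) = mscal N r (f m))"

definition Hom_mod :: "('a, 'm) amod \<Rightarrow> ('a, 'n) amod \<Rightarrow> ('a, 'm \<Rightarrow> 'n) amod" where
  "Hom_mod M N = \<lparr>mcarr = {f \<in> mcarr M \<rightarrow>\<^sub>E mcarr N. is_linear M N f},
     madd = (\<lambda>f g. \<lambda>m\<in>mcarr M. madd N (f m) (g m)),
     mzero = (\<lambda>m\<in>mcarr M. mzero N),
     mscal = (\<lambda>r f. \<lambda>m\<in>mcarr M. mscal N r (f m))\<rparr>"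

definition mod_iso :: "('a, 'm) amod \<Rightarrow> ('a, 'n) amod \<Rightarrow> bool" where
  "mod_iso M N \<longleftrightarrow> (\<exists>f. is_linear M N f \<and> bij_betw f (mcarr M) (mcarr N))"

definition weakly_regular :: "'a \<Rightarrow> ('a, 'm) amod \<Rightarrow> bool" where
  "weakly_regular a M \<longleftrightarrow> (\<forall>m\<in>mcarr M. mscal M a m = mzero M \<longrightarrow> m = mzero M)"

definition coker2 :: "('a::comm_ring_1 \<times> 'a \<Rightarrow> 'a \<times> 'a) \<Rightarrow> ('a, ('a \<times> 'a) set) amod" where
  "coker2 f = quot_mod free2 (range f)"

text \<open>gamma_a = [[x, a],[0, y]] and eta_a = [[y, -a],[0, x]] acting on column vectors.\<close>
definition gamma :: "'a::comm_ring_1 \<Rightarrow> 'a \<Rightarrow> 'a \<Rightarrow> 'a \<times> 'a \<Rightarrow> 'a \<times> 'a" where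
  "gamma x y a = (\<lambda>(u, v). (x * u + a * v, y * v))"

definition eta :: "'a::comm_ring_1 \<Rightarrow> 'a \<Rightarrow> 'a \<Rightarrow> 'a \<times> 'a \<Rightarrow> 'a \<times> 'a" where
  "eta x y a = (\<lambda>(u, v). (y * u - a * v, x * v))"

definition G_mod :: "'a::comm_ring_1 \<Rightarrow> 'a \<Rightarrow> 'a \<Rightarrow> ('a, ('a \<times> 'a) set) amod" where
  "G_mod x y a = coker2 (gamma x y a)"

definition H_mod :: "'a::comm_ring_1 \<Rightarrow> 'a \<Rightarrow> 'a \<Rightarrow> ('a, ('a \<times> 'a) set) amod" where
  "H_mod x y a = coker2 (eta x y a)"

definition ideal2 :: "'a::comm_ring_1 \<Rightarrow> 'a \<Rightarrow> 'a set" where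
  "ideal2 x y = {x * r + y * s | r s. True}"

definition quot_ring_mod :: "'a::comm_ring_1 \<Rightarrow> 'a \<Rightarrow> ('a, 'a set) amod" where
  "quot_ring_mod x y = quot_mod free1 (ideal2 x y)"

end

theory Submission
  imports Defs "HOL-Library.Product_Plus"
begin


definition cs :: "('a::comm_ring_1 \<times> 'a) set \<Rightarrow> 'a \<times> 'a \<Rightarrow> ('a \<times> 'a) set" where
  "cs N p = {q. \<exists>n\<in>N. q = p + n}"

definition sm :: "'a::comm_ring_1 \<Rightarrow> 'a \<times> 'a \<Rightarrow> 'a \<times> 'a" where
  "sm r p = (r * fst p, r * snd p)"

definition submod :: "('a::comm_ring_1 \<times> 'a) set \<Rightarrow> bool" where
  "submod N \<longleftrightarrow> 0 \<in> N \<and> (\<forall>u\<in>N. \<forall>v\<in>N. u + v \<in> N) \<and> (\<forall>r. \<forall>u\<in>N. sm r u \<in> N)"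

definition rep :: "('a \<times> 'a) set \<Rightarrow> 'a \<times> 'a" where
  "rep X = (SOME p. p \<in> X)"

lemma free2_simps: "mcarr free2 = UNIV" "madd free2 p q = p + q" "mzero free2 = 0"
  "mscal free2 r p = sm r p"
  by (simp add: free2_def, cases p, cases q, simp add: free2_def,
      simp add: free2_def zero_prod_def, cases p, simp add: free2_def sm_def)

lemma sm_simps: "sm r (p + q) = sm r p + sm r q" "sm r (p - q) = sm r p - sm r q"
  "sm r 0 = 0" "sm 0 p = 0" "sm r (u, v) = (r*u, r*v)"
  by (auto simp: sm_def algebra_simps zero_prod_def)

lemma submod_0: "submod N \<Longrightarrow> 0 \<in> N" by (simp add: submod_def)
lemma submod_add: "submod N \<Longrightarrow> u \<in> N \<Longrightarrow> v \<in> N \<Longrightarrow> u + v \<in> N" by (simp add: submod_def)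
lemma submod_sm: "submod N \<Longrightarrow> u \<in> N \<Longrightarrow> sm r u \<in> N" by (simp add: submod_def)
lemma submod_neg: "submod N \<Longrightarrow> u \<in> N \<Longrightarrow> - u \<in> N"
proof -
  assume "submod N" "u \<in> N"
  then have "sm (-1) u \<in> N" by (rule submod_sm)
  moreover have "sm (-1) u = - u" by (cases u, simp add: sm_def)
  ultimately show ?thesis by simp
qed
lemma submod_diff: "submod N \<Longrightarrow> u \<in> N \<Longrightarrow> v \<in> N \<Longrightarrow> u - v \<in> N"
  using submod_add[of N u "-v"] submod_neg[of N v] by simp

lemma cs_self: "submod N \<Longrightarrow> p \<in> cs N p"
  unfolding cs_def mem_Collect_eq by (rule bexI[of _ 0]) (simp_all add: submod_0)

lemma cs_eq: assumes "submod N" shows "cs N p = cs N p' \<longleftrightarrow> p - p' \<in> N"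
proof
  assume "cs N p = cs N p'"
  then have "p \<in> cs N p'" using cs_self[OF assms, of p] by simp
  then obtain n where "n \<in> N" "p = p' + n" unfolding cs_def by auto
  then show "p - p' \<in> N" by simp
next
  assume h: "p - p' \<in> N"
  show "cs N p = cs N p'"
  proof (rule set_eqI)
    fix q
    show "q \<in> cs N p \<longleftrightarrow> q \<in> cs N p'"
    proof
      assume "q \<in> cs N p"
      then obtain n where n: "n \<in> N" "q = p + n" unfolding cs_def mem_Collect_eq by blast
      have "q = p' + ((p - p') + n)" using n(2) by (simp add: algebra_simps)
      moreover have "(p - p') + n \<in> N" using submod_add[OF assms h n(1)] .
      ultimately show "q \<in> cs N p'" unfolding cs_def mem_Collect_eq by blast
    next
      assume "q \<in> cs N p'"
      then obtain n where n: "n \<in> N" "q = p' + n" unfolding cs_def mem_Collect_eq by blast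
      have "q = p + (n - (p - p'))" using n(2) by (simp add: algebra_simps)
      moreover have "n - (p - p') \<in> N" using submod_diff[OF assms n(1) h] .
      ultimately show "q \<in> cs N p" unfolding cs_def mem_Collect_eq by blast
    qed
  qed
qed

lemma cs_alt: "{q \<in> UNIV. \<exists>n\<in>N. q = p + n} = cs N p" by (simp add: cs_def)

lemma quot_carr: "mcarr (quot_mod free2 N) = range (cs N)"
proof -
  have "{uu. \<exists>a b. uu = cs N (a, b)} = range (cs N)"
  proof (rule set_eqI, rule iffI)
    fix X assume "X \<in> {uu. \<exists>a b. uu = cs N (a, b)}"
    then show "X \<in> range (cs N)" by blast
  next
    fix X assume "X \<in> range (cs N)"
    then obtain p where "X = cs N p" by blast
    then have "X = cs N (fst p, snd p)" by simp
    then show "X \<in> {uu. \<exists>a b. uu = cs N (a, b)}" by blast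
  qed
  then show ?thesis unfolding quot_mod_def free2_simps cs_alt by simp
qed

lemma quot_zero: "mzero (quot_mod free2 N) = cs N 0"
  unfolding quot_mod_def free2_simps cs_alt by simp

lemma quot_add: assumes "submod N"
  shows "madd (quot_mod free2 N) (cs N p) (cs N p') = cs N (p + p')"
proof -
  have "{q. \<exists>p1\<in>cs N p. \<exists>p2\<in>cs N p'. \<exists>n\<in>N. q = p1 + p2 + n} = cs N (p + p')"
  proof (rule set_eqI, rule iffI)
    fix q assume "q \<in> {q. \<exists>p1\<in>cs N p. \<exists>p2\<in>cs N p'. \<exists>n\<in>N. q = p1 + p2 + n}"
    then obtain p1 p2 n where h: "p1 \<in> cs N p" "p2 \<in> cs N p'" "n \<in> N" "q = p1 + p2 + n" by blast
    obtain n1 where n1: "n1 \<in> N" "p1 = p + n1" using h(1) unfolding cs_def mem_Collect_eq by blast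
    obtain n2 where n2: "n2 \<in> N" "p2 = p' + n2" using h(2) unfolding cs_def mem_Collect_eq by blast
    have "q = (p + p') + (n1 + n2 + n)" unfolding h(4) n1(2) n2(2) by (simp add: algebra_simps)
    moreover have "n1 + n2 + n \<in> N" using submod_add[OF assms] n1(1) n2(1) h(3) by blast
    ultimately show "q \<in> cs N (p + p')" unfolding cs_def mem_Collect_eq by blast
  next
    fix q assume "q \<in> cs N (p + p')"
    then obtain n where "n \<in> N" "q = p + p' + n" unfolding cs_def by auto
    then show "q \<in> {q. \<exists>p1\<in>cs N p. \<exists>p2\<in>cs N p'. \<exists>n\<in>N. q = p1 + p2 + n}"
      using cs_self[OF assms] by blast
  qed
  then show ?thesis unfolding quot_mod_def free2_simps by simp
qed

lemma quot_smul: assumes "submod N"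
  shows "mscal (quot_mod free2 N) r (cs N p) = cs N (sm r p)"
proof -
  have "{q. \<exists>p1\<in>cs N p. \<exists>n\<in>N. q = sm r p1 + n} = cs N (sm r p)"
  proof (rule set_eqI, rule iffI)
    fix q assume "q \<in> {q. \<exists>p1\<in>cs N p. \<exists>n\<in>N. q = sm r p1 + n}"
    then obtain p1 n where h: "p1 \<in> cs N p" "n \<in> N" "q = sm r p1 + n" by blast
    obtain n1 where n1: "n1 \<in> N" "p1 = p + n1" using h(1) unfolding cs_def mem_Collect_eq by blast
    have "q = sm r p + (sm r n1 + n)" unfolding h(3) n1(2) by (simp add: sm_simps algebra_simps)
    moreover have "sm r n1 + n \<in> N" using submod_add[OF assms] submod_sm[OF assms] n1(1) h(2) by blast
    ultimately show "q \<in> cs N (sm r p)" unfolding cs_def mem_Collect_eq by blast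
  next
    fix q assume "q \<in> cs N (sm r p)"
    then obtain n where "n \<in> N" "q = sm r p + n" unfolding cs_def by auto
    then show "q \<in> {q. \<exists>p1\<in>cs N p. \<exists>n\<in>N. q = sm r p1 + n}"
      using cs_self[OF assms] by blast
  qed
  then show ?thesis unfolding quot_mod_def free2_simps by simp
qed

lemma rep_diff: assumes "submod N" shows "rep (cs N p) - p \<in> N"
proof -
  have "rep (cs N p) \<in> cs N p" unfolding rep_def using cs_self[OF assms] by (rule someI)
  then show ?thesis unfolding cs_def by auto
qed

lemma rep_cs: assumes "submod N" "X \<in> range (cs N)" shows "cs N (rep X) = X"
proof -
  obtain p where p: "X = cs N p" using assms(2) by blast
  show ?thesis unfolding p using rep_diff[OF assms(1)] cs_eq[OF assms(1)] by blast
qed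

definition closed_mod :: "('a, 'm) amod \<Rightarrow> bool" where
  "closed_mod M \<longleftrightarrow> (\<forall>m1\<in>mcarr M. \<forall>m2\<in>mcarr M. madd M m1 m2 \<in> mcarr M) \<and>
     (\<forall>r. \<forall>m\<in>mcarr M. mscal M r m \<in> mcarr M)"

lemma closed_quot: "submod N \<Longrightarrow> closed_mod (quot_mod free2 N)"
proof -
  assume N: "submod N"
  have "madd (quot_mod free2 N) m1 m2 \<in> range (cs N)" if hm: "m1 \<in> range (cs N)" "m2 \<in> range (cs N)" for m1 m2
  proof -
    obtain p where "m1 = cs N p" using hm(1) by blast
    moreover obtain p' where "m2 = cs N p'" using hm(2) by blast
    ultimately show ?thesis using quot_add[OF N] by simp
  qed
  moreover have "mscal (quot_mod free2 N) r m \<in> range (cs N)" if hm: "m \<in> range (cs N)" for r m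
  proof -
    obtain p where "m = cs N p" using hm by blast
    then show ?thesis using quot_smul[OF N] by simp
  qed
  ultimately show ?thesis unfolding closed_mod_def quot_carr by blast
qed

lemma mod_iso_trans: "mod_iso M N \<Longrightarrow> mod_iso N K \<Longrightarrow> mod_iso M K"
proof -
  assume "mod_iso M N" "mod_iso N K"
  then obtain f g where f: "is_linear M N f" "bij_betw f (mcarr M) (mcarr N)"
    and g: "is_linear N K g" "bij_betw g (mcarr N) (mcarr K)" unfolding mod_iso_def by blast
  have "is_linear M K (g \<circ> f)" using f(1) g(1) unfolding is_linear_def by auto
  moreover have "bij_betw (g \<circ> f) (mcarr M) (mcarr K)" using f(2) g(2) by (rule bij_betw_trans)
  ultimately show ?thesis unfolding mod_iso_def by blast
qed

lemma mod_iso_sym: assumes "mod_iso M N" "closed_mod M" shows "mod_iso N M"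
proof -
  obtain f where f: "is_linear M N f" "bij_betw f (mcarr M) (mcarr N)"
    using assms(1) unfolding mod_iso_def by blast
  define g where "g = the_inv_into (mcarr M) f"
  have inj: "inj_on f (mcarr M)" and im: "f ` mcarr M = mcarr N" using f(2) by (auto simp: bij_betw_def)
  have gb: "bij_betw g (mcarr N) (mcarr M)" unfolding g_def using f(2) by (rule bij_betw_the_inv_into)
  have gc: "n \<in> mcarr N \<Longrightarrow> g n \<in> mcarr M" for n using gb by (auto simp: bij_betw_def)
  have fg: "n \<in> mcarr N \<Longrightarrow> f (g n) = n" for n unfolding g_def using inj im f_the_inv_into_f by metis
  have gf: "m \<in> mcarr M \<Longrightarrow> g (f m) = m" for m unfolding g_def using inj the_inv_into_f_f by metis
  have "is_linear N M g"
    unfolding is_linear_def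
  proof (intro conjI ballI allI)
    fix n assume "n \<in> mcarr N" then show "g n \<in> mcarr M" by (rule gc)
  next
    fix n1 n2 assume h: "n1 \<in> mcarr N" "n2 \<in> mcarr N"
    have c: "madd M (g n1) (g n2) \<in> mcarr M" using assms(2) gc h unfolding closed_mod_def by blast
    have "f (madd M (g n1) (g n2)) = madd N (f (g n1)) (f (g n2))"
      using f(1) gc[OF h(1)] gc[OF h(2)] unfolding is_linear_def by blast
    also have "\<dots> = madd N n1 n2" using fg h by simp
    finally have "g (madd N n1 n2) = g (f (madd M (g n1) (g n2)))" by simp
    then show "g (madd N n1 n2) = madd M (g n1) (g n2)" using gf[OF c] by simp
  next
    fix r n assume h: "n \<in> mcarr N"
    have c: "mscal M r (g n) \<in> mcarr M" using assms(2) gc h unfolding closed_mod_def by blast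
    have "f (mscal M r (g n)) = mscal N r (f (g n))"
      using f(1) gc[OF h] unfolding is_linear_def by blast
    also have "\<dots> = mscal N r n" using fg h by simp
    finally have "g (mscal N r n) = g (f (mscal M r (g n)))" by simp
    then show "g (mscal N r n) = mscal M r (g n)" using gf[OF c] by simp
  qed
  then show ?thesis using gb unfolding mod_iso_def by blast
qed

lemma mem_gamma: "p \<in> range (gamma x y c) \<longleftrightarrow> (\<exists>u v. p = (x*u + c*v, y*v))"
  by (auto simp: gamma_def image_iff)
lemma mem_eta: "p \<in> range (eta x y c) \<longleftrightarrow> (\<exists>u v. p = (y*u - c*v, x*v))"
  by (auto simp: eta_def image_iff)

lemma submod_gamma: "submod (range (gamma x y c))"
  unfolding submod_def
proof (intro conjI ballI allI)
  show "0 \<in> range (gamma x y c)" unfolding mem_gamma zero_prod_def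
    by (rule exI[of _ 0], rule exI[of _ 0], simp)
next
  fix p q assume "p \<in> range (gamma x y c)" "q \<in> range (gamma x y c)"
  then obtain u v u' v' where "p = (x*u + c*v, y*v)" "q = (x*u' + c*v', y*v')" unfolding mem_gamma by blast
  then have "p + q = (x*(u+u') + c*(v+v'), y*(v+v'))" by (simp add: algebra_simps)
  then show "p + q \<in> range (gamma x y c)" unfolding mem_gamma by blast
next
  fix r p assume "p \<in> range (gamma x y c)"
  then obtain u v where "p = (x*u + c*v, y*v)" unfolding mem_gamma by blast
  then have "sm r p = (x*(r*u) + c*(r*v), y*(r*v))" by (simp add: sm_def algebra_simps)
  then show "sm r p \<in> range (gamma x y c)" unfolding mem_gamma by blast
qed

lemma submod_eta: "submod (range (eta x y c))"
proof -
  have "eta x y c = gamma y x (-c)" by (auto simp: fun_eq_iff eta_def gamma_def)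
  then show ?thesis using submod_gamma by metis
qed


lemma inj_math:
  fixes x y a b e P Q :: "'a::comm_ring_1"
  assumes annx: "\<And>r. r*x = 0 \<Longrightarrow> \<exists>s. r = y*s" and anny: "\<And>r. r*y = 0 \<Longrightarrow> \<exists>s. r = x*s"
    and int: "\<And>r s. x*r = y*s \<Longrightarrow> x*r = 0" and e: "e*e = 1"
    and h1: "(0, e*x*Q) \<in> range (gamma x y b)" and h2: "(P, e*a*Q) \<in> range (gamma x y b)"
  shows "(P, Q) \<in> range (gamma x y (e*(a*b)))"
proof -
  obtain u1 v1 where 1: "e*x*Q = y*v1" using h1 unfolding mem_gamma by auto
  obtain u2 v2 where 2: "P = x*u2 + b*v2" "e*a*Q = y*v2" using h2 unfolding mem_gamma by auto
  have "x*(e*Q) = y*v1" using 1 by (simp add: algebra_simps)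
  then have "x*(e*Q) = 0" by (rule int)
  then have "(e*Q)*x = 0" by (simp add: algebra_simps)
  then obtain w where w: "e*Q = y*w" using annx by blast
  have "(v2 - a*w)*y = y*v2 - a*(y*w)" by (simp add: algebra_simps)
  also have "\<dots> = e*a*Q - a*(e*Q)" using 2(2) w by simp
  also have "\<dots> = 0" by (simp add: algebra_simps)
  finally obtain r where r: "v2 - a*w = x*r" using anny by blast
  have v2: "v2 = x*r + a*w" using r by (simp add: algebra_simps eq_diff_eq)
  have "Q = (e*e)*Q" using e by simp
  also have "\<dots> = e*(e*Q)" by (simp add: algebra_simps)
  also have "\<dots> = y*(e*w)" using w by (simp add: algebra_simps)
  finally have Q: "Q = y*(e*w)" .
  have "e*(a*b)*(e*w) = (e*e)*(a*b*w)" by (simp add: algebra_simps)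
  then have ee: "e*(a*b)*(e*w) = a*b*w" using e by simp
  have P: "P = x*(u2 + b*r) + e*(a*b)*(e*w)" unfolding ee 2(1) v2 by (simp add: algebra_simps)
  show ?thesis unfolding mem_gamma using P Q by blast
qed

lemma surj_math:
  fixes x y a b e c1 d1 c2 d2 :: "'a::comm_ring_1"
  assumes annx: "\<And>r. r*x = 0 \<Longrightarrow> \<exists>s. r = y*s" and anny: "\<And>r. r*y = 0 \<Longrightarrow> \<exists>s. r = x*s"
    and int: "\<And>r s. x*r = y*s \<Longrightarrow> x*r = 0" and e: "e*e = 1"
    and wr: "(\<forall>r. a*r \<in> ideal2 x y \<longrightarrow> r \<in> ideal2 x y) \<or> (\<forall>r. b*r \<in> ideal2 x y \<longrightarrow> r \<in> ideal2 x y)"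
    and h1: "(y*c1, y*d1) \<in> range (gamma x y b)"
    and h2: "(-a*c1 + x*c2, -a*d1 + x*d2) \<in> range (gamma x y b)"
  shows "\<exists>P Q. (c1, d1 - e*x*Q) \<in> range (gamma x y b) \<and> (c2 - P, d2 - e*a*Q) \<in> range (gamma x y b)"
proof -
  obtain s t where st: "y*c1 = x*s + b*t" "y*d1 = y*t" using h1 unfolding mem_gamma by auto
  obtain s2 t2 where st2: "-a*c1 + x*c2 = x*s2 + b*t2" "-a*d1 + x*d2 = y*t2"
    using h2 unfolding mem_gamma by auto
  have "(d1 - t)*y = 0" using st(2) by (simp add: algebra_simps)
  then obtain r1 where r1: "d1 - t = x*r1" using anny by blast
  have t: "t = d1 - x*r1" using r1 by (simp add: algebra_simps)
  have bd: "b*d1 \<in> ideal2 x y"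
  proof -
    have "b*d1 = x*(b*r1 - s) + y*c1" unfolding st(1) t by (simp add: algebra_simps)
    then show ?thesis unfolding ideal2_def by blast
  qed
  have ad: "a*d1 \<in> ideal2 x y"
  proof -
    have "a*d1 = x*d2 - (-a*d1 + x*d2)" by (simp add: algebra_simps)
    also have "\<dots> = x*d2 + y*(-t2)" using st2(2) by simp
    finally have "a*d1 = x*d2 + y*(-t2)" .
    then show ?thesis unfolding ideal2_def by blast
  qed
  have "d1 \<in> ideal2 x y" using wr bd ad by blast
  then obtain q v' where qv: "d1 = x*q + y*v'" unfolding ideal2_def by blast
  have "x*(s - b*r1 + b*q) = y*(c1 - b*v')"
  proof -
    have "y*(c1 - b*v') = y*c1 - b*(y*v')" by (simp add: algebra_simps)
    also have "\<dots> = x*s + b*t - b*(d1 - x*q)" using st(1) qv by (simp add: algebra_simps)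
    also have "\<dots> = x*(s - b*r1 + b*q)" unfolding t by (simp add: algebra_simps)
    finally show ?thesis by simp
  qed
  then have "x*(s - b*r1 + b*q) = 0" by (rule int)
  then have "(c1 - b*v')*y = 0" using \<open>x*(s - b*r1 + b*q) = y*(c1 - b*v')\<close> by (simp add: algebra_simps)
  then obtain k where k: "c1 - b*v' = x*k" using anny by blast
  have "x*(d2 - a*q) = y*(t2 + a*v')"
  proof -
    have "x*(d2 - a*q) = (-a*d1 + x*d2) + a*(d1 - x*q)" by (simp add: algebra_simps)
    also have "\<dots> = y*t2 + a*(y*v')" using st2(2) qv by (simp add: algebra_simps)
    also have "\<dots> = y*(t2 + a*v')" by (simp add: algebra_simps)
    finally show ?thesis .
  qed
  then have "x*(d2 - a*q) = 0" by (rule int)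
  then have "(d2 - a*q)*x = 0" by (simp add: algebra_simps)
  then obtain m where m: "d2 - a*q = y*m" using annx by blast
  have "e*x*(e*q) = (e*e)*(x*q)" "e*a*(e*q) = (e*e)*(a*q)" by (simp_all add: algebra_simps)
  then have eeq: "e*x*(e*q) = x*q" "e*a*(e*q) = a*q" using e by simp_all
  have A: "(c1, d1 - e*x*(e*q)) = (x*k + b*v', y*v')"
    unfolding eeq using k qv by (simp add: algebra_simps eq_diff_eq)
  have B: "(c2 - (c2 - b*m), d2 - e*a*(e*q)) = (x*0 + b*m, y*m)"
    unfolding eeq using m by simp
  show ?thesis unfolding mem_gamma using A B by blast
qed



definition B :: "'a::comm_ring_1 \<Rightarrow> 'a \<Rightarrow> 'a \<Rightarrow> 'a \<times> 'a \<Rightarrow> 'a \<times> 'a \<Rightarrow> 'a \<times> 'a" where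
  "B e x a p w = (snd w * fst p, e * (fst w * x * snd p + snd w * a * snd p))"

lemma B_lin:
  "B e x a p w - B e x a p' w' = B e x a (p - p') w + B e x a p' (w - w')"
  "B e x a (p + p') w = B e x a p w + B e x a p' w"
  "B e x a (sm r p) w = sm r (B e x a p w)"
  "B e x a p (w + w') = B e x a p w + B e x a p w'"
  "B e x a p (sm r w) = sm r (B e x a p w)"
  "B e x a p (u, v) = sm u (B e x a p (1,0)) + sm v (B e x a p (0,1))"
  "B e x a p w - B e x a p' w = B e x a (p - p') w"
  "B e x a (P, Q) (1, 0) = (0, e*x*Q)"
  "B e x a (P, Q) (0, 1) = (P, e*a*Q)"
  by (simp_all add: B_def sm_def algebra_simps)

lemma BD: assumes xy: "x*y = 0" and p: "p \<in> range (gamma x y (e*(a*b)))"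
  shows "B e x a p w \<in> range (gamma x y b)"
proof -
  obtain u v where p: "p = (x*u + e*(a*b)*v, y*v)" using p unfolding mem_gamma by blast
  have z: "fst w * x * (y*v) = 0"
  proof -
    have "fst w * x * (y*v) = (x*y)*(fst w * v)" by (simp add: algebra_simps)
    then show ?thesis using xy by simp
  qed
  have "B e x a p w = (x*(snd w * u) + b*(e*a*snd w*v), y*(e*a*snd w*v))"
    unfolding p B_def using z by (simp add: algebra_simps)
  then show ?thesis unfolding mem_gamma by blast
qed

lemma BS: assumes xy: "x*y = 0" and w: "w \<in> range (eta x y a)"
  shows "B e x a p w \<in> range (gamma x y b)"
proof -
  obtain s t where w: "w = (y*s - a*t, x*t)" using w unfolding mem_eta by blast
  have z: "(y*s - a*t)*x*snd p + x*t*a*snd p = 0"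
  proof -
    have "(y*s - a*t)*x*snd p + x*t*a*snd p = (x*y)*(s*snd p)" by (simp add: algebra_simps)
    then show ?thesis using xy by simp
  qed
  have "B e x a p w = (x*(t*fst p) + b*0, y*0)"
    unfolding B_def using z by (simp add: w algebra_simps)
  then show ?thesis unfolding mem_gamma by blast
qed

lemma core:
  fixes x y a b e :: "'a::comm_ring_1"
  assumes xy: "x*y = 0" and annx: "\<And>r. r*x = 0 \<Longrightarrow> \<exists>s. r = y*s" and anny: "\<And>r. r*y = 0 \<Longrightarrow> \<exists>s. r = x*s"
    and int: "\<And>r s. x*r = y*s \<Longrightarrow> x*r = 0" and e: "e*e = 1"
    and wr: "(\<forall>r. a*r \<in> ideal2 x y \<longrightarrow> r \<in> ideal2 x y) \<or> (\<forall>r. b*r \<in> ideal2 x y \<longrightarrow> r \<in> ideal2 x y)"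
  shows "mod_iso (quot_mod free2 (range (gamma x y (e*(a*b)))))
     (Hom_mod (quot_mod free2 (range (eta x y a))) (quot_mod free2 (range (gamma x y b))))"
proof -
  have Imath: "(P, Q) \<in> range (gamma x y (e*(a*b)))"
    if "(0, e*x*Q) \<in> range (gamma x y b)" "(P, e*a*Q) \<in> range (gamma x y b)" for P Q
    apply (rule inj_math)
         apply (fact annx)
        apply (fact anny)
       apply (fact int)
      apply (fact e)
     apply (fact that(1))
    apply (fact that(2))
    done
  have Smath: "\<exists>P Q. (c1, d1 - e*x*Q) \<in> range (gamma x y b) \<and> (c2 - P, d2 - e*a*Q) \<in> range (gamma x y b)"
    if "(y*c1, y*d1) \<in> range (gamma x y b)" "(-a*c1 + x*c2, -a*d1 + x*d2) \<in> range (gamma x y b)"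
    for c1 d1 c2 d2
    apply (rule surj_math)
          apply (fact annx)
         apply (fact anny)
        apply (fact int)
       apply (fact e)
      apply (fact wr)
     apply (fact that(1))
    apply (fact that(2))
    done
  define S where "S = range (eta x y a)"
  define T where "T = range (gamma x y b)"
  define D where "D = range (gamma x y (e*(a*b)))"
  define M1 where "M1 = quot_mod free2 S"
  define M2 where "M2 = quot_mod free2 T"
  define M3 where "M3 = quot_mod free2 D"
  define BB where "BB = B e x a"
  have hS: "submod S" unfolding S_def by (rule submod_eta)
  have hT: "submod T" unfolding T_def by (rule submod_gamma)
  have hD: "submod D" unfolding D_def by (rule submod_gamma)
  have c1: "mcarr M1 = range (cs S)" unfolding M1_def by (rule quot_carr)
  have c2: "mcarr M2 = range (cs T)" unfolding M2_def by (rule quot_carr)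
  have c3: "mcarr M3 = range (cs D)" unfolding M3_def by (rule quot_carr)
  have add1: "madd M1 (cs S w) (cs S w') = cs S (w + w')" for w w' unfolding M1_def by (rule quot_add[OF hS])
  have add2: "madd M2 (cs T w) (cs T w') = cs T (w + w')" for w w' unfolding M2_def by (rule quot_add[OF hT])
  have add3: "madd M3 (cs D w) (cs D w') = cs D (w + w')" for w w' unfolding M3_def by (rule quot_add[OF hD])
  have sm1: "mscal M1 r (cs S w) = cs S (sm r w)" for r w unfolding M1_def by (rule quot_smul[OF hS])
  have sm2: "mscal M2 r (cs T w) = cs T (sm r w)" for r w unfolding M2_def by (rule quot_smul[OF hT])
  have sm3: "mscal M3 r (cs D w) = cs D (sm r w)" for r w unfolding M3_def by (rule quot_smul[OF hD])
  have BDl: "p \<in> D \<Longrightarrow> BB p w \<in> T" for p w unfolding BB_def D_def T_def using BD[OF xy] by blast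
  have BSl: "w \<in> S \<Longrightarrow> BB p w \<in> T" for p w unfolding BB_def S_def T_def using BS[OF xy] by blast
  define \<Phi> where "\<Phi> = (\<lambda>X. \<lambda>Y\<in>mcarr M1. cs T (BB (rep X) (rep Y)))"
  have key: "\<Phi> (cs D p) (cs S w) = cs T (BB p w)" for p w
  proof -
    have "cs S w \<in> mcarr M1" by (simp add: c1)
    then have "\<Phi> (cs D p) (cs S w) = cs T (BB (rep (cs D p)) (rep (cs S w)))" by (simp add: \<Phi>_def)
    also have "\<dots> = cs T (BB p w)"
    proof -
      have "BB (rep (cs D p)) (rep (cs S w)) - BB p w
          = BB (rep (cs D p) - p) (rep (cs S w)) + BB p (rep (cs S w) - w)"
        unfolding BB_def by (rule B_lin(1))
      moreover have "BB (rep (cs D p) - p) (rep (cs S w)) \<in> T" using BDl rep_diff[OF hD] by blast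
      moreover have "BB p (rep (cs S w) - w) \<in> T" using BSl rep_diff[OF hS] by blast
      ultimately have "BB (rep (cs D p)) (rep (cs S w)) - BB p w \<in> T" using submod_add[OF hT] by simp
      then show ?thesis using cs_eq[OF hT] by blast
    qed
    finally show ?thesis .
  qed
  have outside: "Y \<notin> mcarr M1 \<Longrightarrow> \<Phi> X Y = undefined" for X Y by (simp add: \<Phi>_def)
  have hom_carr: "mcarr (Hom_mod M1 M2) = {f \<in> mcarr M1 \<rightarrow>\<^sub>E mcarr M2. is_linear M1 M2 f}"
    by (simp add: Hom_mod_def)
  have inHom: "\<Phi> X \<in> mcarr (Hom_mod M1 M2)" if hX: "X \<in> mcarr M3" for X
  proof -
    obtain p where X: "X = cs D p" using hX c3 by blast
    have pie: "\<Phi> X \<in> mcarr M1 \<rightarrow>\<^sub>E mcarr M2"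
      unfolding \<Phi>_def restrict_PiE_iff c2 by blast
    have "is_linear M1 M2 (\<Phi> X)"
      unfolding is_linear_def
    proof (intro conjI ballI allI)
      fix m assume "m \<in> mcarr M1" then show "\<Phi> X m \<in> mcarr M2" using pie by blast
    next
      fix m1 m2 assume h: "m1 \<in> mcarr M1" "m2 \<in> mcarr M1"
      obtain w1 where w1: "m1 = cs S w1" using h(1) c1 by blast
      obtain w2 where w2: "m2 = cs S w2" using h(2) c1 by blast
      show "\<Phi> X (madd M1 m1 m2) = madd M2 (\<Phi> X m1) (\<Phi> X m2)"
        unfolding X w1 w2 add1 key add2 BB_def B_lin(4) ..
    next
      fix r m assume h: "m \<in> mcarr M1"
      obtain w where w: "m = cs S w" using h c1 by blast
      show "\<Phi> X (mscal M1 r m) = mscal M2 r (\<Phi> X m)"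
        unfolding X w sm1 key sm2 BB_def B_lin(5) ..
    qed
    then show ?thesis using pie hom_carr by simp
  qed
  have lin: "is_linear M3 (Hom_mod M1 M2) \<Phi>"
    unfolding is_linear_def
  proof (intro conjI ballI allI)
    fix X assume "X \<in> mcarr M3" then show "\<Phi> X \<in> mcarr (Hom_mod M1 M2)" by (rule inHom)
  next
    fix X1 X2 assume h: "X1 \<in> mcarr M3" "X2 \<in> mcarr M3"
    obtain p1 where p1: "X1 = cs D p1" using h(1) c3 by blast
    obtain p2 where p2: "X2 = cs D p2" using h(2) c3 by blast
    show "\<Phi> (madd M3 X1 X2) = madd (Hom_mod M1 M2) (\<Phi> X1) (\<Phi> X2)"
    proof (rule ext)
      fix Y
      show "\<Phi> (madd M3 X1 X2) Y = madd (Hom_mod M1 M2) (\<Phi> X1) (\<Phi> X2) Y"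
      proof (cases "Y \<in> mcarr M1")
        case True
        then obtain w where w: "Y = cs S w" using c1 by blast
        have "\<Phi> (madd M3 X1 X2) Y = cs T (BB (p1 + p2) w)" unfolding p1 p2 add3 w key ..
        also have "\<dots> = madd M2 (\<Phi> X1 Y) (\<Phi> X2 Y)" unfolding p1 p2 w key add2 BB_def B_lin(2) ..
        also have "\<dots> = madd (Hom_mod M1 M2) (\<Phi> X1) (\<Phi> X2) Y" using True by (simp add: Hom_mod_def)
        finally show ?thesis .
      next
        case False
        then show ?thesis using outside by (simp add: Hom_mod_def)
      qed
    qed
  next
    fix r X assume h: "X \<in> mcarr M3"
    obtain p where p: "X = cs D p" using h c3 by blast
    show "\<Phi> (mscal M3 r X) = mscal (Hom_mod M1 M2) r (\<Phi> X)"
    proof (rule ext)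
      fix Y
      show "\<Phi> (mscal M3 r X) Y = mscal (Hom_mod M1 M2) r (\<Phi> X) Y"
      proof (cases "Y \<in> mcarr M1")
        case True
        then obtain w where w: "Y = cs S w" using c1 by blast
        have "\<Phi> (mscal M3 r X) Y = cs T (BB (sm r p) w)" unfolding p sm3 w key ..
        also have "\<dots> = mscal M2 r (\<Phi> X Y)" unfolding p w key sm2 BB_def B_lin(3) ..
        also have "\<dots> = mscal (Hom_mod M1 M2) r (\<Phi> X) Y" using True by (simp add: Hom_mod_def)
        finally show ?thesis .
      next
        case False
        then show ?thesis using outside by (simp add: Hom_mod_def)
      qed
    qed
  qed
  have inj: "inj_on \<Phi> (mcarr M3)"
  proof (rule inj_onI)
    fix X1 X2 assume h: "X1 \<in> mcarr M3" "X2 \<in> mcarr M3" "\<Phi> X1 = \<Phi> X2"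
    obtain p1 where p1: "X1 = cs D p1" using h(1) c3 by blast
    obtain p2 where p2: "X2 = cs D p2" using h(2) c3 by blast
    obtain P Q where PQ: "p1 - p2 = (P, Q)" by (cases "p1 - p2")
    have t1: "BB p1 (1,0) - BB p2 (1,0) \<in> T"
    proof -
      have "cs T (BB p1 (1,0)) = cs T (BB p2 (1,0))" using h(3) unfolding p1 p2 key[symmetric] by simp
      then show ?thesis using cs_eq[OF hT] by blast
    qed
    have t2: "BB p1 (0,1) - BB p2 (0,1) \<in> T"
    proof -
      have "cs T (BB p1 (0,1)) = cs T (BB p2 (0,1))" using h(3) unfolding p1 p2 key[symmetric] by simp
      then show ?thesis using cs_eq[OF hT] by blast
    qed
    have "(0, e*x*Q) \<in> range (gamma x y b)" using t1 unfolding BB_def B_lin(7) PQ B_lin(8) T_def .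
    moreover have "(P, e*a*Q) \<in> range (gamma x y b)" using t2 unfolding BB_def B_lin(7) PQ B_lin(9) T_def .
    ultimately have "(P, Q) \<in> D" unfolding D_def by (rule Imath)
    then have "p1 - p2 \<in> D" using PQ by simp
    then show "X1 = X2" unfolding p1 p2 using cs_eq[OF hD] by blast
  qed
  have surj: "mcarr (Hom_mod M1 M2) \<subseteq> \<Phi> ` mcarr M3"
  proof
    fix \<phi> assume h\<phi>: "\<phi> \<in> mcarr (Hom_mod M1 M2)"
    have pie: "\<phi> \<in> mcarr M1 \<rightarrow>\<^sub>E mcarr M2" and L: "is_linear M1 M2 \<phi>" using h\<phi> hom_carr by auto
    have Ladd: "\<phi> (madd M1 m1 m2) = madd M2 (\<phi> m1) (\<phi> m2)" if "m1 \<in> mcarr M1" "m2 \<in> mcarr M1" for m1 m2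
      using L that unfolding is_linear_def by blast
    have Lsm: "\<phi> (mscal M1 r m) = mscal M2 r (\<phi> m)" if "m \<in> mcarr M1" for r m
      using L that unfolding is_linear_def by blast
    have inS: "cs S w \<in> mcarr M1" for w by (simp add: c1)
    have "\<phi> (cs S (1,0)) \<in> mcarr M2" using pie inS by blast
    then obtain c where c: "\<phi> (cs S (1,0)) = cs T c" using c2 by blast
    have "\<phi> (cs S (0,1)) \<in> mcarr M2" using pie inS by blast
    then obtain d where d: "\<phi> (cs S (0,1)) = cs T d" using c2 by blast
    have "\<phi> (cs S 0) \<in> mcarr M2" using pie inS by blast
    then obtain t0 where t0: "\<phi> (cs S 0) = cs T t0" using c2 by blast
    have z: "\<phi> (cs S 0) = cs T 0"
    proof -
      have "\<phi> (cs S 0) = \<phi> (mscal M1 0 (cs S 0))" unfolding sm1 sm_simps ..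
      also have "\<dots> = mscal M2 0 (\<phi> (cs S 0))" using Lsm inS by blast
      also have "\<dots> = cs T 0" unfolding t0 sm2 sm_simps ..
      finally show ?thesis .
    qed
    have R1: "sm y c \<in> T"
    proof -
      have "sm y (1,0) - 0 \<in> S" unfolding S_def mem_eta sm_def by (rule exI[of _ 1], rule exI[of _ 0], simp)
      then have "cs S (sm y (1,0)) = cs S 0" using cs_eq[OF hS] by blast
      then have "\<phi> (mscal M1 y (cs S (1,0))) = cs T 0" unfolding sm1 using z by simp
      moreover have "cs T (sm y c) = mscal M2 y (\<phi> (cs S (1,0)))" unfolding c sm2 ..
      ultimately have "cs T (sm y c) = cs T 0" using Lsm[OF inS] by simp
      then show ?thesis using cs_eq[OF hT] by simp
    qed
    have R2: "sm (-a) c + sm x d \<in> T"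
    proof -
      have "sm (-a) (1,0) + sm x (0,1) - 0 \<in> S" unfolding S_def mem_eta sm_def
        by (rule exI[of _ 0], rule exI[of _ 1], simp)
      then have "cs S (sm (-a) (1,0) + sm x (0,1)) = cs S 0" using cs_eq[OF hS] by blast
      then have "\<phi> (madd M1 (mscal M1 (-a) (cs S (1,0))) (mscal M1 x (cs S (0,1)))) = cs T 0"
        unfolding sm1 add1 using z by simp
      moreover have "\<phi> (madd M1 (mscal M1 (-a) (cs S (1,0))) (mscal M1 x (cs S (0,1))))
          = cs T (sm (-a) c + sm x d)"
        unfolding sm1 Ladd[OF inS inS] unfolding sm1[symmetric] Lsm[OF inS] c d sm2 add2 ..
      ultimately have "cs T (sm (-a) c + sm x d) = cs T 0" by simp
      then show ?thesis using cs_eq[OF hT] by simp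
    qed
    obtain c1 d1 where cc: "c = (c1, d1)" by (cases c)
    obtain c2 d2 where dd: "d = (c2, d2)" by (cases d)
    have h1: "(y*c1, y*d1) \<in> range (gamma x y b)" using R1 unfolding cc sm_def T_def by simp
    have h2: "(-a*c1 + x*c2, -a*d1 + x*d2) \<in> range (gamma x y b)" using R2 unfolding cc dd sm_def T_def by simp
    obtain P Q where PQ: "(c1, d1 - e*x*Q) \<in> range (gamma x y b)" "(c2 - P, d2 - e*a*Q) \<in> range (gamma x y b)"
      using Smath[OF h1 h2] by blast
    define p where "p = (P, Q)"
    have d1': "c - BB p (1,0) \<in> T" using PQ(1) unfolding p_def BB_def B_lin(8) cc T_def by simp
    have d2': "d - BB p (0,1) \<in> T" using PQ(2) unfolding p_def BB_def B_lin(9) dd T_def by simp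
    have "\<phi> = \<Phi> (cs D p)"
    proof (rule ext)
      fix Y
      show "\<phi> Y = \<Phi> (cs D p) Y"
      proof (cases "Y \<in> mcarr M1")
        case True
        then obtain w where w: "Y = cs S w" using c1 by blast
        obtain u v where uv: "w = (u, v)" by (cases w)
        have Y: "Y = madd M1 (mscal M1 u (cs S (1,0))) (mscal M1 v (cs S (0,1)))"
          unfolding sm1 add1 w uv by (simp add: sm_def)
        have "\<phi> Y = cs T (sm u c + sm v d)"
          unfolding Y sm1 Ladd[OF inS inS] unfolding sm1[symmetric] Lsm[OF inS] c d sm2 add2 ..
        also have "\<dots> = cs T (BB p w)"
        proof -
          have "(sm u c + sm v d) - BB p w = sm u (c - BB p (1,0)) + sm v (d - BB p (0,1))"
            unfolding uv BB_def B_lin(6)[of e x a p u v]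
            by (cases c, cases d, cases "B e x a p (1,0)", cases "B e x a p (0,1)") (simp add: sm_def algebra_simps)
          moreover have "sm u (c - BB p (1,0)) + sm v (d - BB p (0,1)) \<in> T"
            using submod_add[OF hT submod_sm[OF hT d1'] submod_sm[OF hT d2']] .
          ultimately show ?thesis using cs_eq[OF hT] by simp
        qed
        also have "\<dots> = \<Phi> (cs D p) Y" unfolding w key ..
        finally show ?thesis .
      next
        case False
        then show ?thesis using pie outside by (simp add: PiE_def extensional_def)
      qed
    qed
    moreover have "cs D p \<in> mcarr M3" by (simp add: c3)
    ultimately show "\<phi> \<in> \<Phi> ` mcarr M3" by blast
  qed
  have "bij_betw \<Phi> (mcarr M3) (mcarr (Hom_mod M1 M2))"
    unfolding bij_betw_def using inj surj inHom by blast
  then show ?thesis using lin unfolding mod_iso_def M1_def M2_def M3_def S_def T_def D_def by blast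
qed



lemma mem_ideal2: "z \<in> ideal2 x y \<longleftrightarrow> (\<exists>r s. z = x*r + y*s)"
  by (auto simp: ideal2_def)

lemma ideal2_add: "u \<in> ideal2 x y \<Longrightarrow> v \<in> ideal2 x y \<Longrightarrow> u + v \<in> ideal2 x y"
proof -
  assume "u \<in> ideal2 x y" "v \<in> ideal2 x y"
  then obtain r s r' s' where "u = x*r + y*s" "v = x*r' + y*s'" unfolding mem_ideal2 by blast
  then have "u + v = x*(r+r') + y*(s+s')" by (simp add: algebra_simps)
  then show ?thesis unfolding mem_ideal2 by blast
qed

lemma ideal2_mul: "u \<in> ideal2 x y \<Longrightarrow> c*u \<in> ideal2 x y"
proof -
  assume "u \<in> ideal2 x y"
  then obtain r s where "u = x*r + y*s" unfolding mem_ideal2 by blast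
  then have "c*u = x*(c*r) + y*(c*s)" by (simp add: algebra_simps)
  then show ?thesis unfolding mem_ideal2 by blast
qed

lemma ideal2_0: "0 \<in> ideal2 x y"
  unfolding mem_ideal2 by (rule exI[of _ 0], rule exI[of _ 0], simp)

lemma ideal2_diff: "u \<in> ideal2 x y \<Longrightarrow> v \<in> ideal2 x y \<Longrightarrow> u - v \<in> ideal2 x y"
  using ideal2_add[of u x y "(-1)*v"] ideal2_mul[of v x y "-1"] by simp

lemma ideal2_swap: "ideal2 y x = ideal2 x y"
  unfolding ideal2_def by (auto simp: add.commute)

lemma free1_simps: "mcarr free1 = UNIV" "madd free1 = (+)" "mzero free1 = 0" "mscal free1 = (*)"
  by (simp_all add: free1_def)

lemma wr_lemma:
  fixes c r x y :: "'a::comm_ring_1"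
  assumes wr: "weakly_regular c (quot_ring_mod x y)" and cr: "c*r \<in> ideal2 x y"
  shows "r \<in> ideal2 x y"
proof -
  define I where "I = ideal2 x y"
  define m where "m = {q \<in> UNIV. \<exists>n\<in>I. q = r + n}"
  have Q: "quot_ring_mod x y = quot_mod free1 I" unfolding quot_ring_mod_def I_def ..
  have mc: "m \<in> mcarr (quot_ring_mod x y)" unfolding Q quot_mod_def free1_simps m_def by simp blast
  have z: "mzero (quot_ring_mod x y) = I" unfolding Q quot_mod_def free1_simps by simp
  have rm: "r \<in> m"
  proof -
    have "\<exists>n\<in>I. r = r + n" unfolding I_def by (rule bexI[of _ 0]) (simp_all add: ideal2_0)
    then show ?thesis unfolding m_def by simp
  qed
  have s: "mscal (quot_ring_mod x y) c m = I"
  proof -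
    have "{q \<in> UNIV. \<exists>p\<in>m. \<exists>n\<in>I. q = c*p + n} = I"
    proof (rule set_eqI, rule iffI)
      fix q assume "q \<in> {q \<in> UNIV. \<exists>p\<in>m. \<exists>n\<in>I. q = c*p + n}"
      then obtain p n where h: "p \<in> m" "n \<in> I" "q = c*p + n" by blast
      obtain n1 where n1: "n1 \<in> I" "p = r + n1" using h(1) unfolding m_def by blast
      have "q = c*r + (c*n1 + n)" using h(3) n1(2) by (simp add: algebra_simps)
      moreover have "c*r + (c*n1 + n) \<in> I" unfolding I_def
        using ideal2_add ideal2_mul cr n1(1) h(2) unfolding I_def by blast
      ultimately show "q \<in> I" by simp
    next
      fix q assume hq: "q \<in> I"
      note rm
      moreover have "q - c*r \<in> I" using ideal2_diff hq cr unfolding I_def by blast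
      moreover have "q = c*r + (q - c*r)" by simp
      ultimately show "q \<in> {q \<in> UNIV. \<exists>p\<in>m. \<exists>n\<in>I. q = c*p + n}" by blast
    qed
    then show ?thesis unfolding Q quot_mod_def free1_simps by simp
  qed
  have "mscal (quot_ring_mod x y) c m = mzero (quot_ring_mod x y)" using s z by simp
  then have "m = mzero (quot_ring_mod x y)" using wr mc unfolding weakly_regular_def by blast
  then have "m = I" using z by simp
  then show ?thesis using rm unfolding I_def by simp
qed

lemma fun_eqs:
  fixes x y a b :: "'a::comm_ring_1"
  shows "eta y x (-a) = gamma x y a" "gamma y x (-b) = eta x y b"
    "gamma y x (-1*((-a)*(-b))) = eta x y (a*b)"
    "gamma y x (-1*((-b)*(-a))) = eta x y (a*b)"
  by (auto simp: fun_eq_iff eta_def gamma_def algebra_simps)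

theorem theorem7p5:
  fixes x y a b :: "'a::comm_ring_1"
  assumes "noetherian_ring TYPE('a)"
    and "local_ring TYPE('a)"
    and "regular_exact_pair x y"
    and "weakly_regular a (quot_ring_mod x y) \<or> weakly_regular b (quot_ring_mod x y)"
  shows "mod_iso (Hom_mod (H_mod x y a) (G_mod x y b)) (Hom_mod (H_mod x y b) (G_mod x y a))
       \<and> mod_iso (Hom_mod (H_mod x y b) (G_mod x y a)) (G_mod x y (a * b))
       \<and> mod_iso (Hom_mod (G_mod x y a) (H_mod x y b)) (Hom_mod (G_mod x y b) (H_mod x y a))
       \<and> mod_iso (Hom_mod (G_mod x y b) (H_mod x y a)) (H_mod x y (a * b))"
proof -
  have ex: "exact_pair_zero_divisors x y" and inter: "principal_ideal x \<inter> principal_ideal y = {0}"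
    using assms(3) by (auto simp: regular_exact_pair_def)
  have Ax: "Ann x = principal_ideal y" and Ay: "Ann y = principal_ideal x"
    using ex by (auto simp: exact_pair_zero_divisors_def)
  have "y \<in> principal_ideal y" unfolding principal_ideal_def by (rule CollectI, rule exI[of _ 1], simp)
  then have "y \<in> Ann x" using Ax by simp
  then have yx: "y*x = 0" by (simp add: Ann_def)
  then have xy: "x*y = 0" by (simp add: mult.commute)
  have annx: "\<exists>s. r = y*s" if "r*x = 0" for r
  proof -
    have "r \<in> Ann x" using that by (simp add: Ann_def)
    then show ?thesis using Ax by (auto simp: principal_ideal_def)
  qed
  have anny: "\<exists>s. r = x*s" if "r*y = 0" for r
  proof -
    have "r \<in> Ann y" using that by (simp add: Ann_def)
    then show ?thesis using Ay by (auto simp: principal_ideal_def)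
  qed
  have int: "x*r = 0" if "x*r = y*s" for r s
  proof -
    have "x*r \<in> principal_ideal x" unfolding principal_ideal_def by blast
    moreover have "x*r \<in> principal_ideal y" unfolding principal_ideal_def using that by blast
    ultimately show ?thesis using inter by blast
  qed
  have int': "y*r = 0" if "y*r = x*s" for r s
    using int[of s r] that by simp
  define W where "W = (\<lambda>c. \<forall>r. c*r \<in> ideal2 x y \<longrightarrow> r \<in> ideal2 x y)"
  have Wa: "W a" if "weakly_regular a (quot_ring_mod x y)"
    unfolding W_def using wr_lemma[OF that] by blast
  have Wb: "W b" if "weakly_regular b (quot_ring_mod x y)"
    unfolding W_def using wr_lemma[OF that] by blast
  have wab: "W a \<or> W b" using assms(4) Wa Wb by blast
  have negI: "(-c)*r \<in> ideal2 x y \<longleftrightarrow> c*r \<in> ideal2 x y" for c r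
  proof
    assume "(-c)*r \<in> ideal2 x y"
    then have "(-1)*((-c)*r) \<in> ideal2 x y" by (rule ideal2_mul)
    then show "c*r \<in> ideal2 x y" by simp
  next
    assume "c*r \<in> ideal2 x y"
    then have "(-1)*(c*r) \<in> ideal2 x y" by (rule ideal2_mul)
    then show "(-c)*r \<in> ideal2 x y" by simp
  qed
  have wab': "(\<forall>r. (-a)*r \<in> ideal2 y x \<longrightarrow> r \<in> ideal2 y x) \<or> (\<forall>r. (-b)*r \<in> ideal2 y x \<longrightarrow> r \<in> ideal2 y x)"
    using wab unfolding W_def ideal2_swap[where x=x and y=y] negI .
  have wba': "(\<forall>r. (-b)*r \<in> ideal2 y x \<longrightarrow> r \<in> ideal2 y x) \<or> (\<forall>r. (-a)*r \<in> ideal2 y x \<longrightarrow> r \<in> ideal2 y x)"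
    using wab' by blast
  have wab0: "(\<forall>r. a*r \<in> ideal2 x y \<longrightarrow> r \<in> ideal2 x y) \<or> (\<forall>r. b*r \<in> ideal2 x y \<longrightarrow> r \<in> ideal2 x y)"
    using wab unfolding W_def .
  have wba0: "(\<forall>r. b*r \<in> ideal2 x y \<longrightarrow> r \<in> ideal2 x y) \<or> (\<forall>r. a*r \<in> ideal2 x y \<longrightarrow> r \<in> ideal2 x y)"
    using wab0 by blast
  have e1: "(1::'a)*1 = 1" by simp
  have em: "(-1::'a)*(-1) = 1" by simp
  have ba: "b*a = a*b" by (rule mult.commute)
  have K1: "mod_iso (quot_mod free2 (range (gamma x y (1*(a*b)))))
     (Hom_mod (quot_mod free2 (range (eta x y a))) (quot_mod free2 (range (gamma x y b))))"
    apply (rule core)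
         apply (fact xy)
        apply (fact annx)
       apply (fact anny)
      apply (fact int)
     apply (fact e1)
    apply (fact wab0)
    done
  have K2: "mod_iso (quot_mod free2 (range (gamma x y (1*(b*a)))))
     (Hom_mod (quot_mod free2 (range (eta x y b))) (quot_mod free2 (range (gamma x y a))))"
    apply (rule core)
         apply (fact xy)
        apply (fact annx)
       apply (fact anny)
      apply (fact int)
     apply (fact e1)
    apply (fact wba0)
    done
  have K3: "mod_iso (quot_mod free2 (range (gamma y x (-1*((-a)*(-b))))))
     (Hom_mod (quot_mod free2 (range (eta y x (-a)))) (quot_mod free2 (range (gamma y x (-b)))))"
    apply (rule core)
         apply (fact yx)
        apply (fact anny)
       apply (fact annx)
      apply (fact int')
     apply (fact em)
    apply (fact wab')
    done
  have K4: "mod_iso (quot_mod free2 (range (gamma y x (-1*((-b)*(-a))))))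
     (Hom_mod (quot_mod free2 (range (eta y x (-b)))) (quot_mod free2 (range (gamma y x (-a)))))"
    apply (rule core)
         apply (fact yx)
        apply (fact anny)
       apply (fact annx)
      apply (fact int')
     apply (fact em)
    apply (fact wba')
    done
  have C1: "mod_iso (G_mod x y (a*b)) (Hom_mod (H_mod x y a) (G_mod x y b))"
    using K1 unfolding G_mod_def H_mod_def coker2_def mult_1_left .
  have C2: "mod_iso (G_mod x y (a*b)) (Hom_mod (H_mod x y b) (G_mod x y a))"
    using K2 unfolding G_mod_def H_mod_def coker2_def mult_1_left ba .
  have f1: "eta y x (-a) = gamma x y a" "gamma y x (-b) = eta x y b"
    "gamma y x (-1*((-a)*(-b))) = eta x y (a*b)" by (rule fun_eqs)+
  have f2: "eta y x (-b) = gamma x y b" "gamma y x (-a) = eta x y a"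
    "gamma y x (-1*((-b)*(-a))) = eta x y (a*b)" by (rule fun_eqs)+
  have C3: "mod_iso (H_mod x y (a*b)) (Hom_mod (G_mod x y a) (H_mod x y b))"
    using K3 unfolding G_mod_def H_mod_def coker2_def f1 .
  have C4: "mod_iso (H_mod x y (a*b)) (Hom_mod (G_mod x y b) (H_mod x y a))"
    using K4 unfolding G_mod_def H_mod_def coker2_def f2 .
  have cG: "closed_mod (G_mod x y (a*b))" unfolding G_mod_def coker2_def by (rule closed_quot[OF submod_gamma])
  have cH: "closed_mod (H_mod x y (a*b))" unfolding H_mod_def coker2_def by (rule closed_quot[OF submod_eta])
  have S1: "mod_iso (Hom_mod (H_mod x y a) (G_mod x y b)) (G_mod x y (a*b))" using mod_iso_sym[OF C1 cG] .
  have S2: "mod_iso (Hom_mod (H_mod x y b) (G_mod x y a)) (G_mod x y (a*b))" using mod_iso_sym[OF C2 cG] .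
  have S3: "mod_iso (Hom_mod (G_mod x y a) (H_mod x y b)) (H_mod x y (a*b))" using mod_iso_sym[OF C3 cH] .
  have S4: "mod_iso (Hom_mod (G_mod x y b) (H_mod x y a)) (H_mod x y (a*b))" using mod_iso_sym[OF C4 cH] .
  show ?thesis using mod_iso_trans[OF S1 C2] S2 mod_iso_trans[OF S3 C4] S4 by blast
qed


end
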